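(* Let $n\ge 1$ and let $\mathcal{S}_n$ be the Shi arrangement in $\mathbb{R}^n$, consisting of the hyperplanes $x_i - x_j = 0$ and $x_i - x_j = 1$ for all $1 \leq i < j \leq n$. The map $\sigma_n$ (defined below) is a bijection between the set of regions of $\mathcal{S}_n$ and the set of parking functions on $[n]$.
   Context: A region of an arrangement is a connected component of the complement of the union of its hyperplanes. A parking function on $[n]=\{1,\ldots,n\}$ is a map $f:[n]\to[n]$ such that for every $1\le j\le n$ the set $f^{-1}(\{1,\ldots,j\})$ has at least $j$ elements. The diagram of a region $R$ of $\mathcal{S}_n$ is defined as follows. Let $w=w_1w_2\cdots w_n$ be the unique permutation of $[n]$ such that $x_{w_1}>x_{w_2}>\cdots>x_{w_n}$ holds on $R$; the position of $m\in[n]$ is the index $p$ with $w_p=m$. For each pair $i<j$ such that $x_i-x_j>1$ holds on $R$, draw an arc from $i$ to $j$ (it goes rightwards in $w$). Then remove every arc that contains another arc: an arc $(i,l)$ is removed if there is a different arc $(j,k)$ with $i$ weakly to the left of $j$ and $k$ weakly to the left of $l$ in $w$. The remaining arcs partition $[n]$ into chains (the connected components under the remaining arcs), each consisting of increasing integers. The map $\sigma_n$ sends $R$ to the function $f:[n]\to[n]$ where $f(i)$ is the position in $w$ of the leftmost element of the chain containing $i$. *)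

theory Defs
  imports "HOL-Analysis.Analysis"
begin

text \<open>Points of R^n are modelled as functions nat => real that vanish outside {1..n};
  the topology is the product topology on nat => real (Function_Topology), whose
  restriction to this n-dimensional subspace is the Euclidean topology.\<close>

definition shi_complement :: "nat \<Rightarrow> (nat \<Rightarrow> real) set" where
  "shi_complement n = {x. (\<forall>i. i \<notin> {1..n} \<longrightarrow> x i = 0) \<and>
     (\<forall>i j. 1 \<le> i \<longrightarrow> i < j \<longrightarrow> j \<le> n \<longrightarrow> x i - x j \<noteq> 0 \<and> x i - x j \<noteq> 1)}"

definition shi_regions :: "nat \<Rightarrow> (nat \<Rightarrow> real) set set" where
  "shi_regions n = {connected_component_set (shi_complement n) x | x. x \<in> shi_complement n}"

definition parking_functions :: "nat \<Rightarrow> (nat \<Rightarrow> nat) set" where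
  "parking_functions n = {f \<in> {1..n} \<rightarrow>\<^sub>E {1..n}.
     \<forall>j\<in>{1..n}. j \<le> card {i \<in> {1..n}. f i \<le> j}}"

text \<open>Position of m in the word w determined by the point x (x_{w_1} > ... > x_{w_n}).\<close>
definition shi_pos :: "nat \<Rightarrow> (nat \<Rightarrow> real) \<Rightarrow> nat \<Rightarrow> nat" where
  "shi_pos n x m = card {k \<in> {1..n}. x k > x m} + 1"

definition shi_arc :: "nat \<Rightarrow> (nat \<Rightarrow> real) \<Rightarrow> nat \<Rightarrow> nat \<Rightarrow> bool" where
  "shi_arc n x i j \<longleftrightarrow> 1 \<le> i \<and> i < j \<and> j \<le> n \<and> x i - x j > 1"

definition shi_min_arc :: "nat \<Rightarrow> (nat \<Rightarrow> real) \<Rightarrow> nat \<Rightarrow> nat \<Rightarrow> bool" where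
  "shi_min_arc n x i l \<longleftrightarrow> shi_arc n x i l \<and>
     \<not> (\<exists>j k. shi_arc n x j k \<and> (j, k) \<noteq> (i, l) \<and>
            shi_pos n x i \<le> shi_pos n x j \<and> shi_pos n x k \<le> shi_pos n x l)"

definition shi_same_chain :: "nat \<Rightarrow> (nat \<Rightarrow> real) \<Rightarrow> nat \<Rightarrow> nat \<Rightarrow> bool" where
  "shi_same_chain n x i j \<longleftrightarrow>
     (i, j) \<in> ({(a, b). shi_min_arc n x a b} \<union> {(a, b). shi_min_arc n x b a})\<^sup>*"

text \<open>The map sigma_n; all data used is constant on a region, so any point of R may be used.\<close>
definition shi_sigma :: "nat \<Rightarrow> (nat \<Rightarrow> real) set \<Rightarrow> (nat \<Rightarrow> nat)" where
  "shi_sigma n R = (let x = (SOME x. x \<in> R) in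
     (\<lambda>i\<in>{1..n}. Min {shi_pos n x j | j. j \<in> {1..n} \<and> shi_same_chain n x i j}))"

end

theory Submission
  imports Defs
begin

section \<open>Topology: regions are sign classes\<close>

definition same_sign :: "nat \<Rightarrow> (nat \<Rightarrow> real) \<Rightarrow> (nat \<Rightarrow> real) \<Rightarrow> bool" where
  "same_sign n x y \<longleftrightarrow> (\<forall>i j. 1 \<le> i \<longrightarrow> i < j \<longrightarrow> j \<le> n \<longrightarrow>
      (x i < x j \<longleftrightarrow> y i < y j) \<and> (x i - x j > 1 \<longleftrightarrow> y i - y j > 1))"

lemma connected_real_avoid:
  fixes S :: "real set"
  assumes "connected S" "a \<in> S" "b \<in> S" "0 \<notin> S" "1 \<notin> S"
  shows "(a < 0 \<longleftrightarrow> b < 0) \<and> (a > 1 \<longleftrightarrow> b > 1)"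
proof -
  have iv: "\<And>u v z. u \<in> S \<Longrightarrow> v \<in> S \<Longrightarrow> u \<le> z \<Longrightarrow> z \<le> v \<Longrightarrow> z \<in> S"
    using assms(1) connected_iff_interval by blast
  show ?thesis
  proof (intro conjI)
    show "a < 0 \<longleftrightarrow> b < 0"
      using iv[OF assms(2) assms(3), of 0] iv[OF assms(3) assms(2), of 0] assms(4) by force
    show "a > 1 \<longleftrightarrow> b > 1"
      using iv[OF assms(2) assms(3), of 1] iv[OF assms(3) assms(2), of 1] assms(5) by force
  qed
qed

lemma comp_same_sign:
  assumes "connected_component (shi_complement n) x y"
  shows "same_sign n x y"
  unfolding same_sign_def
proof (intro allI impI)
  fix i j :: nat assume ij: "1 \<le> i" "i < j" "j \<le> n"
  obtain T where T: "connected T" "T \<subseteq> shi_complement n" "x \<in> T" "y \<in> T"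
    using assms unfolding connected_component_def by blast
  let ?g = "\<lambda>z::nat\<Rightarrow>real. z i - z j"
  have "continuous_on T ?g"
    by (intro continuous_intros continuous_on_product_then_coordinatewise continuous_on_id)
  then have c: "connected (?g ` T)" using T(1) connected_continuous_image by blast
  have n0: "0 \<notin> ?g ` T" "1 \<notin> ?g ` T"
    using T(2) ij unfolding shi_complement_def by auto
  have "(?g x < 0 \<longleftrightarrow> ?g y < 0) \<and> (?g x > 1 \<longleftrightarrow> ?g y > 1)"
    by (rule connected_real_avoid[OF c _ _ n0]) (use T in auto)
  then show "(x i < x j \<longleftrightarrow> y i < y j) \<and> (x i - x j > 1 \<longleftrightarrow> y i - y j > 1)"
    by auto
qed

lemma convex_avoid:
  fixes a b t :: real
  assumes "a \<noteq> 0" "a \<noteq> 1" "b \<noteq> 0" "b \<noteq> 1" "a < 0 \<longleftrightarrow> b < 0" "a > 1 \<longleftrightarrow> b > 1"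
    "0 \<le> t" "t \<le> 1"
  shows "(1 - t) * a + t * b \<noteq> 0 \<and> (1 - t) * a + t * b \<noteq> 1"
proof -
  have e: "(1 - t) * a + t * b = a + t * (b - a)" by algebra
  consider "a < 0" "b < 0" | "0 < a" "a < 1" "0 < b" "b < 1" | "a > 1" "b > 1"
    using assms by linarith
  then show ?thesis
  proof cases
    case 1
    have "(1 - t) * a \<le> 0" "t * b \<le> 0" using 1 assms by (auto intro: mult_nonneg_nonpos)
    moreover have "(1 - t) * a < 0 \<or> t * b < 0" using 1 assms
      by (cases "t = 1") (auto intro: mult_pos_neg)
    ultimately show ?thesis by linarith
  next
    case 2
    have "(1 - t) * a \<ge> 0" "t * b \<ge> 0" using 2 assms by auto
    moreover have "(1 - t) * a > 0 \<or> t * b > 0" using 2 assms by (cases "t = 1") auto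
    moreover have "(1 - t) * a \<le> (1 - t)" "t * b \<le> t" using 2 assms
      by (auto intro: mult_left_le)
    moreover have "(1 - t) * a < (1 - t) \<or> t * b < t" using 2 assms by (cases "t = 1") auto
    ultimately show ?thesis by linarith
  next
    case 3
    have "(1 - t) * a \<ge> (1 - t)" "t * b \<ge> t"
      using 3 assms mult_left_mono[of 1 a "1 - t"] mult_left_mono[of 1 b t] by auto
    moreover have "(1 - t) * a > (1 - t) \<or> t * b > t" using 3 assms by (cases "t = 1") auto
    ultimately show ?thesis by linarith
  qed
qed

lemma same_sign_comp:
  assumes x: "x \<in> shi_complement n" and y: "y \<in> shi_complement n" and s: "same_sign n x y"
  shows "connected_component (shi_complement n) x y"
proof -
  let ?h = "\<lambda>t::real. \<lambda>i. (1 - t) * x i + t * y i"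
  have "continuous_on {0..1} ?h"
    by (intro continuous_on_coordinatewise_then_product continuous_intros)
  then have c: "connected (?h ` {0..1})" using connected_continuous_image connected_Icc by blast
  have hx: "?h 0 = x" and hy: "?h 1 = y" by auto
  have sub: "?h ` {0..1} \<subseteq> shi_complement n"
  proof
    fix z assume "z \<in> ?h ` {0..1}"
    then obtain t where t: "0 \<le> t" "t \<le> 1" "z = ?h t" by auto
    show "z \<in> shi_complement n" unfolding shi_complement_def
    proof (rule CollectI, rule conjI)
      show "\<forall>i. i \<notin> {1..n} \<longrightarrow> z i = 0" using x y t unfolding shi_complement_def by auto
    next
      show "\<forall>i j. 1 \<le> i \<longrightarrow> i < j \<longrightarrow> j \<le> n \<longrightarrow> z i - z j \<noteq> 0 \<and> z i - z j \<noteq> 1"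
      proof (intro allI impI)
      fix i j :: nat assume ij: "1 \<le> i" "i < j" "j \<le> n"
      have eq: "z i - z j = (1 - t) * (x i - x j) + t * (y i - y j)"
        using t by (simp add: algebra_simps)
      have "(1 - t) * (x i - x j) + t * (y i - y j) \<noteq> 0 \<and> (1 - t) * (x i - x j) + t * (y i - y j) \<noteq> 1"
      proof (rule convex_avoid)
        have "x \<in> shi_complement n" "y \<in> shi_complement n" by fact+
        then have xx: "x i - x j \<noteq> 0" "x i - x j \<noteq> 1" "y i - y j \<noteq> 0" "y i - y j \<noteq> 1"
          using ij unfolding shi_complement_def by auto
        have ss: "(x i < x j \<longleftrightarrow> y i < y j)" "(x i - x j > 1 \<longleftrightarrow> y i - y j > 1)"
          using s ij unfolding same_sign_def by auto
        show "x i - x j \<noteq> 0" "x i - x j \<noteq> 1" "y i - y j \<noteq> 0" "y i - y j \<noteq> 1" by fact+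
        show "(x i - x j < 0) = (y i - y j < 0)" using ss by auto
        show "(x i - x j > 1) = (y i - y j > 1)" using ss by auto
        show "0 \<le> t" "t \<le> 1" by fact+
      qed
      then show "z i - z j \<noteq> 0 \<and> z i - z j \<noteq> 1" using eq by argo
    qed
    qed
  qed
  have "?h 0 \<in> ?h ` {0..1}" "?h 1 \<in> ?h ` {0..1}" by (rule imageI; simp)+
  then have "x \<in> ?h ` {0..1}" "y \<in> ?h ` {0..1}" unfolding hx hy .
  then show ?thesis unfolding connected_component_def using c sub by blast
qed

lemma component_eq_class:
  assumes "x \<in> shi_complement n"
  shows "connected_component_set (shi_complement n) x = {y \<in> shi_complement n. same_sign n x y}"
  using assms comp_same_sign same_sign_comp connected_component_in by blast


section \<open>Combinatorics of a single point\<close>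

definition Fsig :: "nat \<Rightarrow> (nat \<Rightarrow> real) \<Rightarrow> nat \<Rightarrow> nat" where
  "Fsig n x = (\<lambda>i\<in>{1..n}. Min {shi_pos n x j | j. j \<in> {1..n} \<and> shi_same_chain n x i j})"

definition nxt :: "nat \<Rightarrow> (nat \<Rightarrow> nat) \<Rightarrow> nat \<Rightarrow> nat \<Rightarrow> bool" where
  "nxt n f c d \<longleftrightarrow> c \<in> {1..n} \<and> d \<in> {1..n} \<and> c < d \<and> f c = f d \<and>
     (\<forall>e\<in>{1..n}. f e = f c \<longrightarrow> \<not> (c < e \<and> e < d))"

locale shi_pt =
  fixes n :: nat and x :: "nat \<Rightarrow> real"
  assumes inC: "x \<in> shi_complement n"
begin

abbreviation "N \<equiv> {1..n}"
abbreviation "pos \<equiv> shi_pos n x"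
abbreviation "arcx \<equiv> shi_arc n x"
abbreviation "M \<equiv> shi_min_arc n x"
abbreviation "chain \<equiv> shi_same_chain n x"
abbreviation "Fw \<equiv> {(a, b). M a b}"
abbreviation "E \<equiv> {(a, b). M a b} \<union> {(a, b). M b a}"
abbreviation "f \<equiv> Fsig n x"

lemma x_out: "i \<notin> N \<Longrightarrow> x i = 0"
  using inC unfolding shi_complement_def by auto

lemma x_inj: "a \<in> N \<Longrightarrow> b \<in> N \<Longrightarrow> a \<noteq> b \<Longrightarrow> x a \<noteq> x b"
  using inC unfolding shi_complement_def
  by (cases "a < b") (auto, metis atLeastAtMost_iff diff_self linorder_neqE_nat)

lemma pos_less_iff:
  assumes a: "a \<in> N" and b: "b \<in> N"
  shows "pos a < pos b \<longleftrightarrow> x b < x a"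
proof
  assume "x b < x a"
  then have "{k \<in> N. x k > x a} \<subset> {k \<in> N. x k > x b}" using a by auto
  then have "card {k \<in> N. x k > x a} < card {k \<in> N. x k > x b}"
    by (rule psubset_card_mono[rotated]) auto
  then show "pos a < pos b" unfolding shi_pos_def by simp
next
  assume l: "pos a < pos b"
  show "x b < x a"
  proof (rule ccontr)
    assume "\<not> x b < x a"
    then have "{k \<in> N. x k > x b} \<subseteq> {k \<in> N. x k > x a}" by auto
    then have "card {k \<in> N. x k > x b} \<le> card {k \<in> N. x k > x a}"
      by (rule card_mono[rotated]) auto
    then show False using l unfolding shi_pos_def by simp
  qed
qed

lemma pos_le_iff: "a \<in> N \<Longrightarrow> b \<in> N \<Longrightarrow> pos a \<le> pos b \<longleftrightarrow> x b \<le> x a"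
  using pos_less_iff[of b a] by (simp add: not_less[symmetric])

lemma pos_inj: "a \<in> N \<Longrightarrow> b \<in> N \<Longrightarrow> pos a = pos b \<Longrightarrow> a = b"
  using pos_less_iff[of a b] pos_less_iff[of b a] x_inj[of a b] by force

lemma pos_range: assumes a: "a \<in> N" shows "pos a \<in> N"
proof -
  have "{k \<in> N. x k > x a} \<subseteq> N - {a}" by auto
  then have "card {k \<in> N. x k > x a} \<le> card (N - {a})" by (rule card_mono[rotated]) auto
  also have "\<dots> = n - 1" using a by simp
  finally show ?thesis using a unfolding shi_pos_def by auto
qed

lemma pos_image: "pos ` N = N"
proof (rule endo_inj_surj)
  show "inj_on pos N" using pos_inj by (meson inj_onI)
qed (use pos_range in auto)

lemma pos_surj: "p \<in> N \<Longrightarrow> \<exists>a\<in>N. pos a = p"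
  using pos_image by (metis imageE)

lemma arc_iff: "arcx i j \<longleftrightarrow> 1 \<le> i \<and> i < j \<and> j \<le> n \<and> x i - x j > 1"
  unfolding shi_arc_def by simp

lemma arc_props: "arcx i j \<Longrightarrow> i \<in> N \<and> j \<in> N \<and> i < j \<and> pos i < pos j"
  unfolding arc_iff using pos_less_iff[of i j] by auto

lemma M_arc: "M c d \<Longrightarrow> arcx c d"
  unfolding shi_min_arc_def by simp

lemma M_props: "M c d \<Longrightarrow> c \<in> N \<and> d \<in> N \<and> c < d \<and> pos c < pos d"
  using M_arc arc_props by blast

lemma M_nonnest:
  assumes "M c d" "M c' d'" "pos c \<le> pos c'" "pos d' \<le> pos d"
  shows "c = c' \<and> d = d'"
  using assms M_arc unfolding shi_min_arc_def by blast

lemma M_out_unique: "M c d \<Longrightarrow> M c d' \<Longrightarrow> d = d'"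
  using M_nonnest[of c d c d'] M_nonnest[of c d' c d] M_props by fastforce

lemma M_in_unique: "M c d \<Longrightarrow> M c' d \<Longrightarrow> c = c'"
  using M_nonnest[of c d c' d] M_nonnest[of c' d c d] M_props by fastforce

lemma M_order: "M c d \<Longrightarrow> M c' d' \<Longrightarrow> pos c < pos c' \<Longrightarrow> pos d < pos d'"
  using M_nonnest[of c d c' d'] by force

lemma arc_contains_M:
  "arcx i l \<Longrightarrow> \<exists>c d. M c d \<and> pos i \<le> pos c \<and> pos d \<le> pos l"
proof (induction "pos l - pos i" arbitrary: i l rule: less_induct)
  case less
  show ?case
  proof (cases "M i l")
    case True then show ?thesis by blast
  next
    case False
    then obtain j k where jk: "arcx j k" "(j, k) \<noteq> (i, l)" "pos i \<le> pos j" "pos k \<le> pos l"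
      using less.prems unfolding shi_min_arc_def by blast
    have "i \<in> N" "l \<in> N" "j \<in> N" "k \<in> N" using arc_props less.prems jk by auto
    then have "pos j \<noteq> pos i \<or> pos k \<noteq> pos l" using jk(2) pos_inj by blast
    then have "pos k - pos j < pos l - pos i" using jk arc_props[OF jk(1)] by auto
    from less.hyps[OF this jk(1)] jk show ?thesis by fastforce
  qed
qed

lemma contains_M_arc:
  assumes "i \<in> N" "l \<in> N" "i < l" "M c d" "pos i \<le> pos c" "pos d \<le> pos l"
  shows "arcx i l"
proof -
  have cd: "c \<in> N" "d \<in> N" "x c - x d > 1" using M_props[OF assms(4)] M_arc[OF assms(4)] arc_iff by auto
  have "x c \<le> x i" "x l \<le> x d" using pos_le_iff assms cd by auto
  then show ?thesis unfolding arc_iff using assms cd by auto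
qed

lemma chain_iff: "chain i j \<longleftrightarrow> (i, j) \<in> E\<^sup>*"
  unfolding shi_same_chain_def by simp

lemma chain_refl: "chain a a" unfolding chain_iff by simp

lemma chain_sym: "chain a b \<Longrightarrow> chain b a"
proof -
  have "E\<inverse> = E" by auto
  then show "chain a b \<Longrightarrow> chain b a" unfolding chain_iff
    by (metis rtrancl_converseI)
qed

lemma chain_trans: "chain a b \<Longrightarrow> chain b c \<Longrightarrow> chain a c"
  unfolding chain_iff by (rule rtrancl_trans)

lemma chain_M: "M a b \<Longrightarrow> chain a b"
  unfolding chain_iff by auto

lemma Fw_chain: "(a, b) \<in> Fw\<^sup>* \<Longrightarrow> chain a b"
  unfolding chain_iff by (rule rtrancl_mono[THEN subsetD, rotated]) auto

lemma chain_N: "chain a b \<Longrightarrow> a \<in> N \<Longrightarrow> b \<in> N"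
  unfolding chain_iff
proof (induction rule: rtrancl_induct)
  case (step y z) then show ?case using M_props by blast
qed simp

lemma Fw_props: "(a, b) \<in> Fw\<^sup>* \<Longrightarrow> a = b \<or> (a \<in> N \<and> b \<in> N \<and> a < b \<and> pos a < pos b)"
proof (induction rule: rtrancl_induct)
  case (step y z) then show ?case using M_props by fastforce
qed simp

definition head :: "nat \<Rightarrow> bool" where
  "head h \<longleftrightarrow> h \<in> N \<and> (\<forall>c. \<not> M c h)"

lemma head_reach:
  assumes h: "head h" and c: "chain h b"
  shows "(h, b) \<in> Fw\<^sup>*"
  using c unfolding chain_iff
proof (induction rule: rtrancl_induct)
  case base then show ?case by simp
next
  case (step v u)
  from step.hyps(2) show ?case
  proof
    assume "(v, u) \<in> Fw" then show ?thesis using step.IH by (meson rtrancl_into_rtrancl)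
  next
    assume vu: "(v, u) \<in> {(a, b). M b a}"
    from step.IH show ?thesis
    proof (cases rule: rtranclE)
      case base then show ?thesis using h vu unfolding head_def by auto
    next
      case (step v')
      then have "v' = u" using vu M_in_unique by auto
      then show ?thesis using step by simp
    qed
  qed
qed

lemma exists_head: "a \<in> N \<Longrightarrow> \<exists>h. head h \<and> chain a h"
proof (induction "pos a" arbitrary: a rule: less_induct)
  case less
  show ?case
  proof (cases "head a")
    case True then show ?thesis using chain_refl by blast
  next
    case False
    then obtain c where c: "M c a" unfolding head_def using less.prems by auto
    then have "pos c < pos a" "c \<in> N" using M_props by auto
    from less.hyps[OF this] obtain h where "head h" "chain c h" by blast
    then show ?thesis using chain_trans chain_sym chain_M c by blast
  qed
qed

lemma det_total:
  assumes "(h, a) \<in> Fw\<^sup>*" "(h, b) \<in> Fw\<^sup>*"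
  shows "(a, b) \<in> Fw\<^sup>* \<or> (b, a) \<in> Fw\<^sup>*"
  using assms(2)
proof (induction rule: rtrancl_induct)
  case base then show ?case using assms(1) by simp
next
  case (step b b')
  from step.IH show ?case
  proof
    assume "(a, b) \<in> Fw\<^sup>*" then show ?thesis using step.hyps(2) by (meson rtrancl_into_rtrancl)
  next
    assume "(b, a) \<in> Fw\<^sup>*"
    then show ?thesis
    proof (cases rule: converse_rtranclE)
      case base then show ?thesis using step.hyps(2) by auto
    next
      case (step b'')
      then have "b'' = b'" using \<open>(b, b') \<in> Fw\<close> M_out_unique by auto
      then show ?thesis using step by auto
    qed
  qed
qed

lemma f_head:
  assumes a: "a \<in> N" and h: "head h" and c: "chain a h"
  shows "f a = pos h"
proof -
  have hN: "h \<in> N" using h unfolding head_def by auto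
  have "Min {pos j | j. j \<in> N \<and> chain a j} = pos h"
  proof (rule Min_eqI)
    show "finite {pos j | j. j \<in> N \<and> chain a j}"
      by (rule finite_subset[of _ "pos ` N"]) auto
    show "pos h \<in> {pos j | j. j \<in> N \<and> chain a j}" using hN c by auto
  next
    fix y assume "y \<in> {pos j | j. j \<in> N \<and> chain a j}"
    then obtain j where j: "y = pos j" "j \<in> N" "chain a j" by auto
    then have "chain h j" using c chain_sym chain_trans by blast
    then have "(h, j) \<in> Fw\<^sup>*" using head_reach h by blast
    then show "pos h \<le> y" using Fw_props j by force
  qed
  then show ?thesis using a unfolding Fsig_def by simp
qed

lemma head_unique: "head h \<Longrightarrow> head h' \<Longrightarrow> chain h h' \<Longrightarrow> h = h'"
  using head_reach chain_sym Fw_props by (metis order_less_asym)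

lemma f_eq_iff:
  assumes a: "a \<in> N" and b: "b \<in> N"
  shows "f a = f b \<longleftrightarrow> chain a b"
proof -
  obtain ha where ha: "head ha" "chain a ha" using exists_head a by blast
  obtain hb where hb: "head hb" "chain b hb" using exists_head b by blast
  have fa: "f a = pos ha" and fb: "f b = pos hb" using f_head a b ha hb by auto
  have N: "ha \<in> N" "hb \<in> N" using ha hb unfolding head_def by auto
  show ?thesis
  proof
    assume "f a = f b"
    then have "ha = hb" using fa fb pos_inj N by auto
    then show "chain a b" using ha hb chain_sym chain_trans by blast
  next
    assume "chain a b"
    then have "chain ha hb" using ha hb chain_sym chain_trans by blast
    then have "ha = hb" using head_unique ha hb by blast
    then show "f a = f b" using fa fb by simp
  qed
qed

lemma f_le_pos: assumes a: "a \<in> N" shows "f a \<le> pos a" "f a \<in> N"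
proof -
  obtain h where h: "head h" "chain a h" using exists_head a by blast
  have "(h, a) \<in> Fw\<^sup>*" using head_reach h chain_sym by blast
  then show "f a \<le> pos a" using f_head[OF a h] Fw_props by force
  show "f a \<in> N" using f_head[OF a h] pos_range h unfolding head_def by auto
qed

lemma head_iff: assumes a: "a \<in> N" shows "head a \<longleftrightarrow> f a = pos a"
proof
  assume "head a" then show "f a = pos a" using f_head a chain_refl by blast
next
  assume fa: "f a = pos a"
  show "head a" unfolding head_def
  proof (intro conjI allI notI)
    fix c assume c: "M c a"
    then have "c \<in> N" "pos c < pos a" using M_props by auto
    moreover have "f c = f a" using f_eq_iff c chain_M chain_sym M_props by blast
    ultimately show False using f_le_pos fa by fastforce
  qed (use a in auto)
qed

lemma head_min: assumes h: "head h" and b: "b \<in> N" and fb: "f b = f h" shows "h \<le> b"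
proof -
  have "chain h b" using f_eq_iff fb b h chain_sym unfolding head_def by metis
  then show ?thesis using head_reach h Fw_props by force
qed

lemma M_iff_nxt: "M c d \<longleftrightarrow> nxt n f c d"
proof
  assume m: "M c d"
  have p: "c \<in> N" "d \<in> N" "c < d" "pos c < pos d" using M_props m by auto
  have fcd: "f c = f d" using f_eq_iff p chain_M m by blast
  obtain h where h: "head h" "chain c h" using exists_head p by blast
  have hc: "(h, c) \<in> Fw\<^sup>*" using head_reach h chain_sym by blast
  show "nxt n f c d" unfolding nxt_def
  proof (intro conjI ballI impI notI)
    fix e assume e: "e \<in> N" "f e = f c" and ce: "c < e \<and> e < d"
    have "chain c e" using f_eq_iff e p by metis
    then have he: "(h, e) \<in> Fw\<^sup>*" using head_reach h chain_sym chain_trans by blast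
    from det_total[OF hc he] show False
    proof
      assume "(c, e) \<in> Fw\<^sup>*"
      then show False
      proof (cases rule: converse_rtranclE)
        case base then show ?thesis using ce by simp
      next
        case (step c')
        then have "c' = d" using m M_out_unique by auto
        then show ?thesis using step Fw_props ce by force
      qed
    next
      assume "(e, c) \<in> Fw\<^sup>*" then show False using Fw_props ce by force
    qed
  qed (use p fcd in auto)
next
  assume nx: "nxt n f c d"
  then have p: "c \<in> N" "d \<in> N" "c < d" "f c = f d" and
    no: "\<And>e. e \<in> N \<Longrightarrow> f e = f c \<Longrightarrow> \<not> (c < e \<and> e < d)"
    unfolding nxt_def by auto
  obtain h where h: "head h" "chain c h" using exists_head p by blast
  have hc: "(h, c) \<in> Fw\<^sup>*" using head_reach h chain_sym by blast
  have "chain c d" using f_eq_iff p by blast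
  then have hd: "(h, d) \<in> Fw\<^sup>*" using head_reach h chain_sym chain_trans by blast
  from det_total[OF hc hd] show "M c d"
  proof
    assume "(c, d) \<in> Fw\<^sup>*"
    then show ?thesis
    proof (cases rule: converse_rtranclE)
      case base then show ?thesis using p by simp
    next
      case (step c')
      have c'N: "c' \<in> N" "c < c'" using step M_props by auto
      have "f c' = f c" using f_eq_iff c'N p chain_M step by (metis case_prodD mem_Collect_eq)
      then have "\<not> (c < c' \<and> c' < d)" using no c'N by blast
      moreover have "c' \<le> d" using step Fw_props by force
      ultimately have "c' = d" using c'N by auto
      then show ?thesis using step by simp
    qed
  next
    assume "(d, c) \<in> Fw\<^sup>*" then show ?thesis using Fw_props p by force
  qed
qed

lemma arc_char:
  "arcx i l \<longleftrightarrow> i \<in> N \<and> l \<in> N \<and> i < l \<and> (\<exists>c d. M c d \<and> pos i \<le> pos c \<and> pos d \<le> pos l)"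
  using arc_contains_M contains_M_arc arc_props by blast

lemma f_parking: "f \<in> parking_functions n"
  unfolding parking_functions_def
proof (intro CollectI conjI ballI)
  show "f \<in> N \<rightarrow>\<^sub>E N" unfolding Fsig_def using f_le_pos(2) by (auto simp: Fsig_def)
next
  fix j assume j: "j \<in> N"
  have "{i \<in> N. pos i \<le> j} \<subseteq> {i \<in> N. f i \<le> j}" using f_le_pos by force
  then have "card {i \<in> N. pos i \<le> j} \<le> card {i \<in> N. f i \<le> j}" by (rule card_mono[rotated]) auto
  moreover have "card {i \<in> N. pos i \<le> j} = j"
  proof -
    have "bij_betw pos {i \<in> N. pos i \<le> j} {1..j}"
      unfolding bij_betw_def
    proof
      show "inj_on pos {i \<in> N. pos i \<le> j}" using pos_inj by (auto intro: inj_onI)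
      show "pos ` {i \<in> N. pos i \<le> j} = {1..j}"
      proof
        show "pos ` {i \<in> N. pos i \<le> j} \<subseteq> {1..j}" using pos_range by auto
        show "{1..j} \<subseteq> pos ` {i \<in> N. pos i \<le> j}"
        proof
          fix p assume "p \<in> {1..j}"
          then have "p \<in> N" using j by auto
          then obtain a where "a \<in> N" "pos a = p" using pos_surj by blast
          then show "p \<in> pos ` {i \<in> N. pos i \<le> j}" using \<open>p \<in> {1..j}\<close> by auto
        qed
      qed
    qed
    then show ?thesis by (simp add: bij_betw_same_card)
  qed
  ultimately show "j \<le> card {i \<in> N. f i \<le> j}" by simp
qed

end


lemma Fsig_inj:
  assumes x: "x \<in> shi_complement n" and y: "y \<in> shi_complement n"
    and eq: "Fsig n x = Fsig n y"
  shows "same_sign n x y"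
proof -
  interpret X: shi_pt n x by (rule shi_pt.intro[OF x])
  interpret Y: shi_pt n y by (rule shi_pt.intro[OF y])
  have Meq: "\<And>c d. X.M c d \<longleftrightarrow> Y.M c d" using X.M_iff_nxt Y.M_iff_nxt eq by simp
  have sym: "X.pos a = Y.pos a" if P: "\<forall>a\<in>X.N. X.pos a < p \<longrightarrow> Y.pos a = X.pos a"
    and a: "a \<in> X.N" "Y.pos a < p" for p a
  proof -
    obtain a' where a': "a' \<in> X.N" "X.pos a' = Y.pos a" using X.pos_surj Y.pos_range a by metis
    then have "Y.pos a' = Y.pos a" using P a by auto
    then have "a' = a" using Y.pos_inj a' a by blast
    then show ?thesis using a' by simp
  qed
  have P: "\<forall>a\<in>X.N. X.pos a < p \<longrightarrow> Y.pos a = X.pos a" for p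
  proof (induction p)
    case 0 then show ?case by simp
  next
    case (Suc p)
    note IH = Suc.IH
    show ?case
    proof (intro ballI impI)
      fix a assume aN: "a \<in> X.N" and ap: "X.pos a < Suc p"
      show "Y.pos a = X.pos a"
      proof (cases "X.pos a < p")
        case True then show ?thesis using IH aN by blast
      next
        case False
        then have pa: "X.pos a = p" using ap by simp
        then have "p \<in> X.N" using X.pos_range[OF aN] by simp
        then obtain b where bN: "b \<in> X.N" and pb: "Y.pos b = p" using Y.pos_surj by blast
        have "a = b"
        proof (cases "X.head a")
          case True
          then have fa: "X.f a = p" using X.head_iff aN pa by simp
          obtain h where h: "Y.head h" "Y.chain a h" using Y.exists_head aN by blast
          have hN: "h \<in> X.N" using h(1) unfolding Y.head_def by simp
          have "Y.f a = Y.pos h" using Y.f_head aN h by blast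
          then have "Y.pos h = Y.pos b" using fa pb eq by simp
          then have hb: "h = b" using Y.pos_inj[OF hN bN] by simp
          have "Y.chain a b" using h hb by simp
          then have fb: "Y.f b = Y.f a" using Y.f_eq_iff[OF aN bN] by simp
          have "a \<le> b" using X.head_min[OF True bN] fb eq by simp
          moreover have "b \<le> a" using Y.head_min[of b a] h hb aN fb by simp
          ultimately show ?thesis by simp
        next
          case False
          have nb: "\<not> Y.head b"
          proof
            assume hb: "Y.head b"
            then have fb: "Y.f b = p" using Y.head_iff bN pb by simp
            obtain h where h: "X.head h" "X.chain b h" using X.exists_head bN by blast
            have hN: "h \<in> X.N" using h(1) unfolding X.head_def by simp
            have "X.f b = X.pos h" using X.f_head bN h by blast
            then have "X.pos h = X.pos a" using fb pa eq by simp
            then have "h = a" using X.pos_inj[OF hN aN] by simp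
            then show False using False h by simp
          qed
          obtain c where c: "X.M c a" using False aN unfolding X.head_def by auto
          obtain c' where c': "Y.M c' b" using nb bN unfolding Y.head_def by auto
          have cY: "Y.M c a" and c'X: "X.M c' b" using c c' Meq by auto
          have cN: "c \<in> X.N" "X.pos c < p" using X.M_props[OF c] pa by auto
          have c'N: "c' \<in> X.N" "Y.pos c' < p" using Y.M_props[OF c'] pb by auto
          have pc: "Y.pos c = X.pos c" using IH cN by blast
          have pc': "X.pos c' = Y.pos c'" using sym[OF IH c'N] .
          consider "X.pos c < X.pos c'" | "X.pos c' < X.pos c" | "X.pos c = X.pos c'" by linarith
          then show ?thesis
          proof cases
            case 1
            then have "Y.pos c < Y.pos c'" using pc pc' by simp
            then have "Y.pos a < p" using Y.M_order[OF cY c'] pb by simp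
            then have "X.pos a = Y.pos a" using sym[OF IH aN] by simp
            then show ?thesis using pa \<open>Y.pos a < p\<close> by simp
          next
            case 2
            then have "X.pos b < p" using X.M_order[OF c'X c] pa by simp
            then have "Y.pos b = X.pos b" using IH bN by blast
            then show ?thesis using pb \<open>X.pos b < p\<close> by simp
          next
            case 3
            then have "c = c'" using X.pos_inj[OF cN(1) c'N(1)] by simp
            then show ?thesis using X.M_out_unique[OF c] c'X by simp
          qed
        qed
        then show ?thesis using pa pb by simp
      qed
    qed
  qed
  have peq: "\<And>a. a \<in> X.N \<Longrightarrow> X.pos a = Y.pos a"
  proof -
    fix a assume "a \<in> X.N"
    then show "X.pos a = Y.pos a" using P[of "Suc (X.pos a)"] by auto
  qed
  show ?thesis unfolding same_sign_def
  proof (intro allI impI conjI)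
    fix i j :: nat assume ij: "1 \<le> i" "i < j" "j \<le> n"
    then have N: "i \<in> X.N" "j \<in> X.N" by auto
    show "x i < x j \<longleftrightarrow> y i < y j"
      using X.pos_less_iff[OF N(2) N(1)] Y.pos_less_iff[OF N(2) N(1)] peq N by simp
    have ex: "(\<exists>c d. X.M c d \<and> X.pos i \<le> X.pos c \<and> X.pos d \<le> X.pos j) \<longleftrightarrow>
          (\<exists>c d. Y.M c d \<and> Y.pos i \<le> Y.pos c \<and> Y.pos d \<le> Y.pos j)"
    proof
      assume "\<exists>c d. X.M c d \<and> X.pos i \<le> X.pos c \<and> X.pos d \<le> X.pos j"
      then obtain c d where cd: "X.M c d" "X.pos i \<le> X.pos c" "X.pos d \<le> X.pos j" by blast
      then have "c \<in> X.N" "d \<in> X.N" using X.M_props by auto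
      then show "\<exists>c d. Y.M c d \<and> Y.pos i \<le> Y.pos c \<and> Y.pos d \<le> Y.pos j"
        using cd Meq peq N by (intro exI[of _ c] exI[of _ d]) simp
    next
      assume "\<exists>c d. Y.M c d \<and> Y.pos i \<le> Y.pos c \<and> Y.pos d \<le> Y.pos j"
      then obtain c d where cd: "Y.M c d" "Y.pos i \<le> Y.pos c" "Y.pos d \<le> Y.pos j" by blast
      then have "c \<in> X.N" "d \<in> X.N" using Y.M_props by auto
      then show "\<exists>c d. X.M c d \<and> X.pos i \<le> X.pos c \<and> X.pos d \<le> X.pos j"
        using cd Meq peq N by (intro exI[of _ c] exI[of _ d]) simp
    qed
    have "X.arcx i j \<longleftrightarrow> Y.arcx i j"
      unfolding X.arc_char Y.arc_char using ex by simp
    then show "x i - x j > 1 \<longleftrightarrow> y i - y j > 1"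
      unfolding X.arc_iff Y.arc_iff using ij by simp
  qed
qed


lemma same_sign_Fsig:
  assumes x: "x \<in> shi_complement n" and z: "z \<in> shi_complement n" and s: "same_sign n x z"
  shows "Fsig n x = Fsig n z"
proof -
  interpret X: shi_pt n x by (rule shi_pt.intro[OF x])
  interpret Z: shi_pt n z by (rule shi_pt.intro[OF z])
  have ord: "x m < x k \<longleftrightarrow> z m < z k" if "k \<in> X.N" "m \<in> X.N" for k m
  proof -
    consider "k < m" | "k = m" | "m < k" by linarith
    then show ?thesis
    proof cases
      case 1
      then have "x k < x m \<longleftrightarrow> z k < z m" using s that unfolding same_sign_def by auto
      moreover have "x k \<noteq> x m" "z k \<noteq> z m" using X.x_inj Z.x_inj that 1 by auto
      ultimately show ?thesis by linarith
    next
      case 3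
      then show ?thesis using s that unfolding same_sign_def by auto
    qed simp
  qed
  have pos: "X.pos m = Z.pos m" if "m \<in> X.N" for m
  proof -
    have "{k \<in> X.N. x k > x m} = {k \<in> X.N. z k > z m}" using ord that by auto
    then show ?thesis unfolding shi_pos_def by simp
  qed
  have arc: "X.arcx i j \<longleftrightarrow> Z.arcx i j" for i j
    unfolding X.arc_iff Z.arc_iff using s unfolding same_sign_def by auto
  have M: "X.M = Z.M"
  proof (intro ext)
    fix i l
    show "X.M i l = Z.M i l"
    proof
      assume m: "X.M i l"
      then have N: "i \<in> X.N" "l \<in> X.N" using X.M_props by auto
      show "Z.M i l" unfolding shi_min_arc_def
      proof (intro conjI notI)
        show "Z.arcx i l" using m X.M_arc arc by blast
        assume "\<exists>j k. Z.arcx j k \<and> (j, k) \<noteq> (i, l) \<and> Z.pos i \<le> Z.pos j \<and> Z.pos k \<le> Z.pos l"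
        then obtain j k where jk: "Z.arcx j k" "(j, k) \<noteq> (i, l)" "Z.pos i \<le> Z.pos j" "Z.pos k \<le> Z.pos l"
          by blast
        then have "j \<in> X.N" "k \<in> X.N" using Z.arc_props by auto
        then have "X.arcx j k" "X.pos i \<le> X.pos j" "X.pos k \<le> X.pos l" using jk arc pos N by auto
        then show False using m jk(2) unfolding shi_min_arc_def by blast
      qed
    next
      assume m: "Z.M i l"
      then have N: "i \<in> X.N" "l \<in> X.N" using Z.M_props by auto
      show "X.M i l" unfolding shi_min_arc_def
      proof (intro conjI notI)
        show "X.arcx i l" using m Z.M_arc arc by blast
        assume "\<exists>j k. X.arcx j k \<and> (j, k) \<noteq> (i, l) \<and> X.pos i \<le> X.pos j \<and> X.pos k \<le> X.pos l"
        then obtain j k where jk: "X.arcx j k" "(j, k) \<noteq> (i, l)" "X.pos i \<le> X.pos j" "X.pos k \<le> X.pos l"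
          by blast
        then have "j \<in> X.N" "k \<in> X.N" using X.arc_props by auto
        then have "Z.arcx j k" "Z.pos i \<le> Z.pos j" "Z.pos k \<le> Z.pos l" using jk arc pos N by auto
        then show False using m jk(2) unfolding shi_min_arc_def by blast
      qed
    qed
  qed
  have ch: "X.chain = Z.chain" unfolding shi_same_chain_def M ..
  have "{X.pos j |j. j \<in> X.N \<and> X.chain i j} = {Z.pos j |j. j \<in> X.N \<and> Z.chain i j}" for i
    using pos ch by force
  then show ?thesis unfolding Fsig_def by simp
qed

lemma sigma_class:
  assumes x: "x \<in> shi_complement n"
  shows "shi_sigma n (connected_component_set (shi_complement n) x) = Fsig n x"
proof -
  let ?R = "connected_component_set (shi_complement n) x"
  have "x \<in> ?R" using x by simp
  then have z: "(SOME z. z \<in> ?R) \<in> ?R" by (rule someI[where P = "\<lambda>z. z \<in> ?R"])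
  then have "same_sign n x (SOME z. z \<in> ?R)" "(SOME z. z \<in> ?R) \<in> shi_complement n"
    using component_eq_class[OF x] by auto
  then have "Fsig n (SOME z. z \<in> ?R) = Fsig n x" using same_sign_Fsig x by metis
  then show ?thesis unfolding shi_sigma_def Fsig_def Let_def by simp
qed


definition goodX :: "nat \<Rightarrow> (nat \<Rightarrow> nat) \<Rightarrow> nat \<Rightarrow> (nat \<Rightarrow> real) \<Rightarrow> bool" where
  "goodX m r k X \<longleftrightarrow> (\<forall>p q. k \<le> p \<longrightarrow> p < q \<longrightarrow> q \<le> m \<longrightarrow>
      X q < X p \<and> (r p \<le> q \<longrightarrow> X p - X q > 1) \<and> (q < r p \<longrightarrow> X p - X q < 1))"

lemma goodX_step:
  assumes mono: "\<And>p q. 1 \<le> p \<Longrightarrow> p \<le> q \<Longrightarrow> q \<le> m \<Longrightarrow> r p \<le> r q"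
    and gt: "\<And>p. 1 \<le> p \<Longrightarrow> p \<le> m \<Longrightarrow> p < r p \<and> r p \<le> m + 1"
    and k: "1 \<le> k" "k \<le> m"
    and G: "goodX m r (Suc k) X"
  shows "\<exists>X'. goodX m r k X'"
proof (cases "k = m")
  case True
  then show ?thesis unfolding goodX_def by (intro exI[of _ X]) auto
next
  case False
  then have k1: "Suc k \<le> m" using k by simp
  have Gp: "\<And>p q. Suc k \<le> p \<Longrightarrow> p < q \<Longrightarrow> q \<le> m \<Longrightarrow>
      X q < X p \<and> (r p \<le> q \<longrightarrow> X p - X q > 1) \<and> (q < r p \<longrightarrow> X p - X q < 1)"
    using G unfolding goodX_def by blast
  define r0 where "r0 = r k"
  have r0: "k < r0" "r0 \<le> m + 1" using gt k unfolding r0_def by auto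
  have dec: "X q \<le> X p" if "Suc k \<le> p" "p \<le> q" "q \<le> m" for p q
  proof (cases "p = q")
    case False then show ?thesis using Gp[of p q] that by simp
  qed simp
  define lo where "lo = (if r0 \<le> m then max (X (Suc k)) (X r0 + 1) else X (Suc k))"
  define v where "v = (if Suc k < r0 - 1 \<or> Suc k = r0 - 1 then (lo + (X (r0 - 1) + 1)) / 2 else lo + 1)"
  have lohi: "lo < X (r0 - 1) + 1" if "Suc k \<le> r0 - 1"
  proof -
    have a: "X (Suc k) < X (r0 - 1) + 1"
    proof (cases "Suc k = r0 - 1")
      case True then show ?thesis by simp
    next
      case False
      then have "Suc k < r0 - 1" "r0 - 1 \<le> m" using that r0 by auto
      moreover have "r0 - 1 < r (Suc k)" using mono[of k "Suc k"] k k1 r0 unfolding r0_def by auto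
      ultimately show ?thesis using Gp[of "Suc k" "r0 - 1"] by simp
    qed
    have b: "X r0 + 1 < X (r0 - 1) + 1" if "r0 \<le> m"
      using Gp[of "r0 - 1" r0] that \<open>Suc k \<le> r0 - 1\<close> r0 by simp
    show ?thesis unfolding lo_def using a b by auto
  qed
  have vlo: "lo < v"
    using lohi unfolding v_def by (auto simp: field_simps)
  have vhi: "v < X (r0 - 1) + 1" if "Suc k \<le> r0 - 1"
    using lohi[OF that] that unfolding v_def by (auto simp: field_simps)
  define X' where "X' = X(k := v)"
  have "goodX m r k X'" unfolding goodX_def
  proof (intro allI impI)
    fix p q assume pq: "k \<le> p" "p < q" "q \<le> m"
    show "X' q < X' p \<and> (r p \<le> q \<longrightarrow> X' p - X' q > 1) \<and> (q < r p \<longrightarrow> X' p - X' q < 1)"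
    proof (cases "p = k")
      case False
      then have "Suc k \<le> p" using pq by simp
      moreover have "X' p = X p" "X' q = X q" using pq False unfolding X'_def by auto
      ultimately show ?thesis using Gp[of p q] pq by simp
    next
      case True
      have Xq: "X' q = X q" "X' p = v" using pq True unfolding X'_def by auto
      have q1: "Suc k \<le> q" using pq True by simp
      have "X q \<le> X (Suc k)" using dec[OF order_refl q1 pq(3)] .
      moreover have "X (Suc k) \<le> lo" unfolding lo_def by auto
      ultimately have A: "X q < v" using vlo by simp
      have B: "v - X q > 1" if "r p \<le> q"
      proof -
        have "r0 \<le> q" "r0 \<le> m" using that True pq unfolding r0_def by auto
        then have "X q \<le> X r0" using dec[of r0 q] r0 pq by simp
        moreover have "X r0 + 1 \<le> lo" using \<open>r0 \<le> m\<close> unfolding lo_def by auto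
        ultimately show ?thesis using vlo by simp
      qed
      have C: "v - X q < 1" if "q < r p"
      proof -
        have "q \<le> r0 - 1" "Suc k \<le> r0 - 1" using that True q1 unfolding r0_def by auto
        then have "X (r0 - 1) \<le> X q" using dec[of q "r0 - 1"] q1 r0 by simp
        then show ?thesis using vhi[OF \<open>Suc k \<le> r0 - 1\<close>] by simp
      qed
      show ?thesis using A B C Xq by simp
    qed
  qed
  then show ?thesis by blast
qed

lemma goodX_exists:
  assumes mono: "\<And>p q. 1 \<le> p \<Longrightarrow> p \<le> q \<Longrightarrow> q \<le> m \<Longrightarrow> r p \<le> r q"
    and gt: "\<And>p. 1 \<le> p \<Longrightarrow> p \<le> m \<Longrightarrow> p < r p \<and> r p \<le> m + 1"
  shows "\<exists>X. goodX m r 1 X"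
proof -
  have "\<exists>X. goodX m r (m + 1 - d) X" if "d \<le> m" for d
    using that
  proof (induction d)
    case 0 then show ?case unfolding goodX_def by auto
  next
    case (Suc d)
    then obtain X where "goodX m r (m + 1 - d) X" by auto
    moreover have "m + 1 - d = Suc (m + 1 - Suc d)" using Suc.prems by simp
    ultimately have "goodX m r (Suc (m + 1 - Suc d)) X" by simp
    then show ?case using goodX_step[OF mono gt] Suc.prems by simp
  qed
  from this[of m] show ?thesis by simp
qed


definition hd_of :: "nat \<Rightarrow> (nat \<Rightarrow> nat) \<Rightarrow> nat \<Rightarrow> nat" where
  "hd_of n f p = (LEAST a. a \<in> {1..n} \<and> f a = p)"

definition sc :: "nat \<Rightarrow> (nat \<Rightarrow> nat) \<Rightarrow> nat \<Rightarrow> nat" where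
  "sc n f c = (SOME d. nxt n f c d)"

definition avail :: "nat \<Rightarrow> (nat \<Rightarrow> nat) \<Rightarrow> nat list \<Rightarrow> nat \<Rightarrow> bool" where
  "avail n f ws i \<longleftrightarrow> i < length ws \<and> (\<exists>d. nxt n f (ws ! i) d \<and> d \<notin> set ws)"

definition pick :: "nat \<Rightarrow> (nat \<Rightarrow> nat) \<Rightarrow> nat list \<Rightarrow> nat \<Rightarrow> nat" where
  "pick n f ws p = (if p \<in> f ` {1..n} then hd_of n f p else sc n f (ws ! (LEAST i. avail n f ws i)))"

primrec Wl :: "nat \<Rightarrow> (nat \<Rightarrow> nat) \<Rightarrow> nat \<Rightarrow> nat list" where
  "Wl n f 0 = []"
| "Wl n f (Suc p) = Wl n f p @ [pick n f (Wl n f p) (Suc p)]"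

locale pf_ctx =
  fixes n :: nat and f :: "nat \<Rightarrow> nat"
  assumes pf: "f \<in> parking_functions n"
begin

abbreviation "N \<equiv> {1..n}"
abbreviation "nx \<equiv> nxt n f"
abbreviation "hdo \<equiv> hd_of n f"

lemma f_range: "a \<in> N \<Longrightarrow> f a \<in> N"
  using pf unfolding parking_functions_def by auto

lemma f_ext: "a \<notin> N \<Longrightarrow> f a = undefined"
  using pf unfolding parking_functions_def by auto

lemma pf_count: "j \<in> N \<Longrightarrow> j \<le> card {i \<in> N. f i \<le> j}"
  using pf unfolding parking_functions_def by auto

lemma hd_props:
  assumes "p \<in> f ` N"
  shows "hdo p \<in> N" "f (hdo p) = p" "\<And>a. a \<in> N \<Longrightarrow> f a = p \<Longrightarrow> hdo p \<le> a"
proof -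
  obtain a where a: "a \<in> N" "f a = p" using assms by auto
  have "hdo p \<in> N \<and> f (hdo p) = p" unfolding hd_of_def
    by (rule LeastI[of _ a]) (use a in auto)
  then show "hdo p \<in> N" "f (hdo p) = p" by auto
  show "\<And>a. a \<in> N \<Longrightarrow> f a = p \<Longrightarrow> hdo p \<le> a" unfolding hd_of_def
    by (rule Least_le) auto
qed

lemma nx_props: "nx c d \<Longrightarrow> c \<in> N \<and> d \<in> N \<and> c < d \<and> f c = f d"
  unfolding nxt_def by auto

lemma nx_fun: "nx c d \<Longrightarrow> nx c d' \<Longrightarrow> d = d'"
  unfolding nxt_def by (metis linorder_neqE_nat)

lemma nx_inj: "nx c d \<Longrightarrow> nx c' d \<Longrightarrow> c = c'"
  unfolding nxt_def by (metis linorder_neqE_nat)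

lemma nx_not_hd: "p \<in> f ` N \<Longrightarrow> \<not> nx c (hdo p)"
proof
  assume p: "p \<in> f ` N" and c: "nx c (hdo p)"
  then have "c \<in> N" "c < hdo p" "f c = p" using nx_props hd_props by auto
  then show False using hd_props(3)[OF p] by fastforce
qed

lemma sc_nx: "nx c d \<Longrightarrow> sc n f c = d"
  unfolding sc_def using nx_fun by (metis someI_ex)

lemma hd_or_nx:
  assumes a: "a \<in> N"
  shows "a = hdo (f a) \<or> (\<exists>c. nx c a)"
proof (cases "a = hdo (f a)")
  case False
  have fa: "f a \<in> f ` N" using a by auto
  have lt: "hdo (f a) < a" using hd_props(3)[OF fa a] False by simp
  define S where "S = {e \<in> N. f e = f a \<and> e < a}"
  have S: "finite S" "hdo (f a) \<in> S" unfolding S_def using hd_props[OF fa] lt by auto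
  define c where "c = Max S"
  have c: "c \<in> S" "\<And>e. e \<in> S \<Longrightarrow> e \<le> c" using S unfolding c_def by (auto intro: Max_in)
  have "nx c a" unfolding nxt_def
  proof (intro conjI ballI impI notI)
    fix e assume "e \<in> N" "f e = f c" "c < e \<and> e < a"
    then have "e \<in> S" using c unfolding S_def by auto
    then show False using c \<open>c < e \<and> e < a\<close> by fastforce
  qed (use c a in \<open>auto simp: S_def\<close>)
  then show ?thesis by blast
qed simp

definition Inv :: "nat \<Rightarrow> nat list \<Rightarrow> bool" where
  "Inv p ws \<longleftrightarrow> length ws = p \<and> distinct ws \<and> set ws \<subseteq> N \<and> (\<forall>a\<in>set ws. f a \<le> p) \<and>
    (\<forall>q. 1 \<le> q \<longrightarrow> q \<le> p \<longrightarrow> q \<in> f ` N \<longrightarrow> ws ! (q - 1) = hdo q) \<and>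
    (\<forall>j c. j < p \<longrightarrow> nx c (ws ! j) \<longrightarrow> (\<exists>i<j. ws ! i = c)) \<and>
    (\<forall>i j i' d'. j < p \<longrightarrow> i < p \<longrightarrow> nx (ws ! i) (ws ! j) \<longrightarrow> i' < i \<longrightarrow> nx (ws ! i') d' \<longrightarrow>
        (\<exists>j'<j. ws ! j' = d'))"

lemma exists_avail:
  assumes I: "Inv p ws" and p: "Suc p \<le> n" and nh: "Suc p \<notin> f ` N"
  shows "\<exists>i. avail n f ws i"
proof -
  have len: "length ws = p" and dist: "distinct ws" and setN: "set ws \<subseteq> N"
    and fle: "\<forall>a\<in>set ws. f a \<le> p"
    and heads: "\<forall>q. 1 \<le> q \<longrightarrow> q \<le> p \<longrightarrow> q \<in> f ` N \<longrightarrow> ws ! (q - 1) = hdo q"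
    using I unfolding Inv_def by auto
  have c1: "Suc p \<le> card {a \<in> N. f a \<le> Suc p}" using pf_count p by auto
  have c2: "card (set ws) = p" using dist len distinct_card by blast
  have "\<not> {a \<in> N. f a \<le> Suc p} \<subseteq> set ws"
  proof
    assume "{a \<in> N. f a \<le> Suc p} \<subseteq> set ws"
    then have "card {a \<in> N. f a \<le> Suc p} \<le> card (set ws)" by (rule card_mono[rotated]) auto
    then show False using c1 c2 by simp
  qed
  then obtain a where a: "a \<in> N" "f a \<le> Suc p" "a \<notin> set ws" by blast
  have "f a \<noteq> Suc p"
  proof
    assume "f a = Suc p"
    then have "Suc p \<in> f ` N" using a(1) by (metis imageI)
    then show False using nh by simp
  qed
  then have fap: "f a \<le> p" using a by simp
  define a' where "a' = (LEAST e. e \<in> N \<and> f e = f a \<and> e \<notin> set ws)"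
  have "a' \<in> N \<and> f a' = f a \<and> a' \<notin> set ws" unfolding a'_def
    by (rule LeastI[of _ a]) (use a in auto)
  then have a': "a' \<in> N" "f a' = f a" "a' \<notin> set ws" by auto
  have amin: "\<And>e. e \<in> N \<Longrightarrow> f e = f a \<Longrightarrow> e \<notin> set ws \<Longrightarrow> a' \<le> e"
    unfolding a'_def by (rule Least_le) auto
  have fa: "f a \<in> f ` N" using a by auto
  have "1 \<le> f a" using f_range a by auto
  then have "ws ! (f a - 1) = hdo (f a)" using heads fap fa by auto
  moreover have "f a - 1 < length ws" using len fap \<open>1 \<le> f a\<close> by simp
  ultimately have hin: "hdo (f a) \<in> set ws" by (metis nth_mem)
  have "a' \<noteq> hdo (f a')" using hin a' by auto
  then obtain c where c: "nx c a'" using hd_or_nx a' by blast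
  have cp: "c \<in> N" "c < a'" "f c = f a" using nx_props[OF c] a' by auto
  have "c \<in> set ws" using amin[of c] cp by fastforce
  then obtain i where i: "i < length ws" "ws ! i = c" by (metis in_set_conv_nth)
  have "avail n f ws i" unfolding avail_def using i c a' by auto
  then show ?thesis by blast
qed

lemma Inv_step:
  assumes I: "Inv p ws" and p: "Suc p \<le> n"
  shows "Inv (Suc p) (ws @ [pick n f ws (Suc p)])"
proof -
  have len: "length ws = p" and dist: "distinct ws" and setN: "set ws \<subseteq> N"
    and fle: "\<forall>a\<in>set ws. f a \<le> p"
    and heads: "\<forall>q. 1 \<le> q \<longrightarrow> q \<le> p \<longrightarrow> q \<in> f ` N \<longrightarrow> ws ! (q - 1) = hdo q"
    and bk: "\<forall>j c. j < p \<longrightarrow> nx c (ws ! j) \<longrightarrow> (\<exists>i<j. ws ! i = c)"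
    and fifo: "\<forall>i j i' d'. j < p \<longrightarrow> i < p \<longrightarrow> nx (ws ! i) (ws ! j) \<longrightarrow> i' < i \<longrightarrow> nx (ws ! i') d' \<longrightarrow>
        (\<exists>j'<j. ws ! j' = d')"
    using I unfolding Inv_def by auto
  define e where "e = pick n f ws (Suc p)"
  have E: "e \<in> N \<and> e \<notin> set ws \<and> f e \<le> Suc p \<and> (Suc p \<in> f ` N \<longrightarrow> e = hdo (Suc p)) \<and>
    (\<forall>c. nx c e \<longrightarrow> (\<exists>i<p. ws ! i = c \<and> (\<forall>i'<i. \<not> avail n f ws i')))"
  proof (cases "Suc p \<in> f ` N")
    case True
    then have e: "e = hdo (Suc p)" unfolding e_def pick_def by simp
    have "e \<notin> set ws" using fle hd_props(2)[OF True] e by auto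
    then show ?thesis using e hd_props[OF True] nx_not_hd[OF True] by auto
  next
    case False
    then have e: "e = sc n f (ws ! (LEAST i. avail n f ws i))" unfolding e_def pick_def by simp
    define i0 where "i0 = (LEAST i. avail n f ws i)"
    have av: "avail n f ws i0" unfolding i0_def using exists_avail[OF I p False] by (metis LeastI)
    have lst: "\<And>i'. i' < i0 \<Longrightarrow> \<not> avail n f ws i'" unfolding i0_def using not_less_Least by blast
    obtain d where d: "nx (ws ! i0) d" "d \<notin> set ws" "i0 < length ws" using av unfolding avail_def by blast
    have ed: "e = d" using e sc_nx[OF d(1)] unfolding i0_def by simp
    have "ws ! i0 \<in> set ws" using d(3) by simp
    then have "f (ws ! i0) \<le> p" using fle by blast
    then have "f e \<le> Suc p" using nx_props[OF d(1)] ed by simp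
    moreover have "\<forall>c. nx c e \<longrightarrow> (\<exists>i<p. ws ! i = c \<and> (\<forall>i'<i. \<not> avail n f ws i'))"
      using nx_inj d ed lst len by blast
    ultimately show ?thesis using d ed nx_props[OF d(1)] False by auto
  qed
  let ?ws = "ws @ [e]"
  have nth_old: "\<And>i. i < p \<Longrightarrow> ?ws ! i = ws ! i" using len by (simp add: nth_append)
  have nth_new: "?ws ! p = e" using len by (metis nth_append_length)
  have "Inv (Suc p) ?ws" unfolding Inv_def
  proof (intro conjI allI impI ballI)
    show "length ?ws = Suc p" using len by simp
    show "distinct ?ws" using dist E by simp
    show "set ?ws \<subseteq> N" using setN E by simp
  next
    fix a assume "a \<in> set ?ws" then show "f a \<le> Suc p" using fle E by auto
  next
    fix q assume q: "1 \<le> q" "q \<le> Suc p" "q \<in> f ` N"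
    show "?ws ! (q - 1) = hdo q"
    proof (cases "q = Suc p")
      case True then show ?thesis using nth_new E q by simp
    next
      case False then show ?thesis using heads q nth_old by simp
    qed
  next
    fix j c assume j: "j < Suc p" and c: "nx c (?ws ! j)"
    show "\<exists>i<j. ?ws ! i = c"
    proof (cases "j = p")
      case True
      have "nx c e" using c True nth_new by simp
      then obtain i where "i < p" "ws ! i = c" using E by blast
      then show ?thesis using nth_old True by auto
    next
      case False
      then have "j < p" using j by simp
      then obtain i where "i < j" "ws ! i = c" using bk c nth_old by auto
      then show ?thesis using nth_old \<open>j < p\<close> by auto
    qed
  next
    fix i j i' d'
    assume j: "j < Suc p" and i: "i < Suc p" and ij: "nx (?ws ! i) (?ws ! j)" and ii: "i' < i"
      and d': "nx (?ws ! i') d'"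
    have "i < j"
    proof -
      have "\<exists>i2<j. ?ws ! i2 = ?ws ! i"
      proof (cases "j = p")
        case True
        have "nx (?ws ! i) e" using ij True nth_new by simp
        then obtain i2 where "i2 < p" "ws ! i2 = ?ws ! i" using E by blast
        then show ?thesis using nth_old True by auto
      next
        case False
        then have "j < p" using j by simp
        have "nx (?ws ! i) (ws ! j)" using ij nth_old \<open>j < p\<close> by simp
        then obtain i2 where "i2 < j" "ws ! i2 = ?ws ! i" using bk \<open>j < p\<close> by blast
        then show ?thesis using nth_old \<open>j < p\<close> by auto
      qed
      then obtain i2 where i2: "i2 < j" "?ws ! i2 = ?ws ! i" by blast
      have "distinct ?ws" using dist E by simp
      then have "i2 = i" using nth_eq_iff_index_eq[of ?ws i2 i] i2 i j len by simp
      then show ?thesis using i2 by simp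
    qed
    then have ip: "i < p" "i' < p" using j ii by auto
    show "\<exists>j'<j. ?ws ! j' = d'"
    proof (cases "j = p")
      case True
      then have "nx (ws ! i) e" using ij nth_old nth_new ip by simp
      then obtain i1 where i1: "i1 < p" "ws ! i1 = ws ! i" "\<forall>i'<i1. \<not> avail n f ws i'" using E by blast
      have "i1 = i" using i1 ip dist len by (simp add: nth_eq_iff_index_eq)
      then have "\<not> avail n f ws i'" using i1 ii by simp
      moreover have "nx (ws ! i') d'" using d' nth_old ip by simp
      ultimately have "d' \<in> set ws" using ip len unfolding avail_def by auto
      then obtain j' where "j' < p" "ws ! j' = d'" using len by (metis in_set_conv_nth)
      then show ?thesis using nth_old True by auto
    next
      case False
      then have jp: "j < p" using j by simp
      then obtain j' where "j' < j" "ws ! j' = d'"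
        using fifo ij d' nth_old ip ii by (metis)
      then show ?thesis using nth_old jp by auto
    qed
  qed
  then show ?thesis unfolding e_def .
qed

lemma Inv_W: "p \<le> n \<Longrightarrow> Inv p (Wl n f p)"
proof (induction p)
  case 0 then show ?case unfolding Inv_def by simp
next
  case (Suc p) then show ?case using Inv_step by simp
qed

end


context pf_ctx
begin

abbreviation "ws \<equiv> Wl n f n"

lemma ws_Inv: "Inv n ws" using Inv_W by simp

lemma ws_props: "length ws = n" "distinct ws" "set ws = N"
proof -
  show l: "length ws = n" and d: "distinct ws" using ws_Inv unfolding Inv_def by auto
  have "set ws \<subseteq> N" using ws_Inv unfolding Inv_def by auto
  moreover have "card (set ws) = card N" using l d distinct_card by fastforce
  ultimately show "set ws = N" using card_subset_eq by (metis finite_atLeastAtMost)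
qed

definition posq :: "nat \<Rightarrow> nat" where
  "posq a = Suc (THE i. i < n \<and> ws ! i = a)"

lemma posq_nth: assumes "i < n" shows "posq (ws ! i) = Suc i"
proof -
  have "(THE j. j < n \<and> ws ! j = ws ! i) = i"
  proof (rule the_equality)
    fix j assume "j < n \<and> ws ! j = ws ! i"
    then show "j = i" using ws_props assms nth_eq_iff_index_eq by metis
  qed (use assms in simp)
  then show ?thesis unfolding posq_def by simp
qed

lemma posq_range: assumes a: "a \<in> N" shows "posq a \<in> N" "ws ! (posq a - 1) = a"
proof -
  obtain i where i: "i < n" "ws ! i = a" using a ws_props by (metis in_set_conv_nth)
  then have "posq a = Suc i" using posq_nth by blast
  then show "posq a \<in> N" "ws ! (posq a - 1) = a" using i by auto
qed

lemma posq_inj: "a \<in> N \<Longrightarrow> b \<in> N \<Longrightarrow> posq a = posq b \<Longrightarrow> a = b"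
proof -
  assume a: "a \<in> N" and b: "b \<in> N" and e: "posq a = posq b"
  have "a = ws ! (posq a - 1)" using posq_range(2)[OF a] by simp
  also have "\<dots> = ws ! (posq b - 1)" using e by simp
  also have "\<dots> = b" using posq_range(2)[OF b] by simp
  finally show "a = b" .
qed

lemma posq_hd: assumes q: "q \<in> f ` N" shows "posq (hdo q) = q"
proof -
  have q1: "1 \<le> q" "q \<le> n" using q f_range by auto
  then have "ws ! (q - 1) = hdo q" using ws_Inv q unfolding Inv_def by auto
  then show ?thesis using posq_nth[of "q - 1"] q1 by simp
qed

lemma posq_nx: assumes cd: "nx c d" shows "posq c < posq d"
proof -
  have N: "c \<in> N" "d \<in> N" using nx_props cd by auto
  define j where "j = posq d - 1"
  have j: "j < n" "ws ! j = d" using posq_range[OF N(2)] unfolding j_def by auto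
  have B: "\<forall>j<n. \<forall>c. nx c (ws ! j) \<longrightarrow> (\<exists>i<j. ws ! i = c)" using ws_Inv unfolding Inv_def by blast
  have "nx c (ws ! j)" using cd j by simp
  then obtain i where "i < j" "ws ! i = c" using B j(1) by blast
  then have "i < n" using j by simp
  then have "posq (ws ! i) = Suc i" by (rule posq_nth)
  then have "posq c = Suc i" using \<open>ws ! i = c\<close> by simp
  then show ?thesis using \<open>i < j\<close> posq_range[OF N(2)] unfolding j_def by auto
qed

lemma posq_fifo:
  assumes cd: "nx c d" and cd': "nx c' d'" and lt: "posq c' < posq c"
  shows "posq d' < posq d"
proof -
  have N: "c \<in> N" "d \<in> N" "c' \<in> N" "d' \<in> N" using nx_props cd cd' by auto
  define i j i' where "i = posq c - 1" "j = posq d - 1" "i' = posq c' - 1"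
  have r: "i < n" "ws ! i = c" "j < n" "ws ! j = d" "i' < n" "ws ! i' = c'" "i' < i"
    using posq_range[OF N(1)] posq_range[OF N(2)] posq_range[OF N(3)] lt unfolding i_j_i'_def
    by auto
  have F: "\<forall>i j i' d'. j < n \<longrightarrow> i < n \<longrightarrow> nx (ws ! i) (ws ! j) \<longrightarrow> i' < i \<longrightarrow> nx (ws ! i') d' \<longrightarrow>
        (\<exists>j'<j. ws ! j' = d')" using ws_Inv unfolding Inv_def by blast
  have "\<exists>j'<j. ws ! j' = d'"
    by (rule F[rule_format, of j i i' d']) (use r cd cd' in auto)
  then obtain j' where j': "j' < j" "ws ! j' = d'" by blast
  then have "j' < n" using r by simp
  then have "posq (ws ! j') = Suc j'" by (rule posq_nth)
  then have "posq d' = Suc j'" using j' by simp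
  then show ?thesis using j' posq_range N unfolding i_j_i'_def by auto
qed

definition PP :: "nat \<Rightarrow> nat \<Rightarrow> bool" where
  "PP l r \<longleftrightarrow> (\<exists>c d. nx c d \<and> posq c = l \<and> posq d = r)"

definition rr :: "nat \<Rightarrow> nat" where
  "rr p = (if \<exists>l r. p \<le> l \<and> PP l r then LEAST r. \<exists>l. p \<le> l \<and> PP l r else n + 1)"

lemma PP_props: assumes "PP l r" shows "l < r \<and> r \<le> n"
proof -
  obtain c d where cd: "nx c d" "posq c = l" "posq d = r" using assms unfolding PP_def by blast
  have "d \<in> N" using nx_props[OF cd(1)] by simp
  then have "posq d \<in> N" by (rule posq_range)
  then show ?thesis using posq_nx[OF cd(1)] cd by auto
qed

lemma rr_some:
  assumes "\<exists>l r. p \<le> l \<and> PP l r"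
  shows "\<exists>l. p \<le> l \<and> PP l (rr p)"
proof -
  obtain l r where lr: "p \<le> l" "PP l r" using assms by blast
  have "\<exists>l. p \<le> l \<and> PP l (LEAST r. \<exists>l. p \<le> l \<and> PP l r)"
    by (rule LeastI[where P = "\<lambda>r. \<exists>l. p \<le> l \<and> PP l r"]) (use lr in blast)
  then show ?thesis unfolding rr_def using assms by simp
qed

lemma rr_le:
  assumes "p \<le> l" "PP l r"
  shows "rr p \<le> r"
proof -
  have "(LEAST r. \<exists>l. p \<le> l \<and> PP l r) \<le> r"
    by (rule Least_le[where P = "\<lambda>r. \<exists>l. p \<le> l \<and> PP l r"]) (use assms in blast)
  moreover have "rr p = (LEAST r. \<exists>l. p \<le> l \<and> PP l r)" unfolding rr_def using assms by auto
  ultimately show ?thesis by simp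
qed

lemma rr_none: "\<not> (\<exists>l r. p \<le> l \<and> PP l r) \<Longrightarrow> rr p = n + 1"
  unfolding rr_def by (rule if_not_P)

lemma rr_char:
  assumes "p < q" "q \<le> n"
  shows "rr p \<le> q \<longleftrightarrow> (\<exists>c d. nx c d \<and> p \<le> posq c \<and> posq d \<le> q)"
proof
  assume "\<exists>c d. nx c d \<and> p \<le> posq c \<and> posq d \<le> q"
  then obtain c d where cd: "nx c d" "p \<le> posq c" "posq d \<le> q" by blast
  then have "PP (posq c) (posq d)" unfolding PP_def by blast
  then have "rr p \<le> posq d" using rr_le cd(2) by blast
  then show "rr p \<le> q" using cd by simp
next
  assume r: "rr p \<le> q"
  show "\<exists>c d. nx c d \<and> p \<le> posq c \<and> posq d \<le> q"
  proof (cases "\<exists>l r. p \<le> l \<and> PP l r")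
    case True
    then obtain l where "p \<le> l" "PP l (rr p)" using rr_some by blast
    then obtain c d where "p \<le> l" "nx c d" "posq c = l" "posq d = rr p" unfolding PP_def by blast
    then show ?thesis using r by (intro exI[of _ c] exI[of _ d]) simp
  next
    case False
    then show ?thesis using r assms rr_none by simp
  qed
qed

lemma rr_bound: "rr p \<le> n + 1"
proof (cases "\<exists>l r. p \<le> l \<and> PP l r")
  case True
  then obtain l r where lr: "p \<le> l" "PP l r" by blast
  have "rr p \<le> r" using rr_le lr by blast
  then show ?thesis using PP_props[OF lr(2)] by simp
next
  case False then show ?thesis using rr_none by simp
qed

lemma rr_gt: assumes "p \<le> n" shows "p < rr p"
proof (cases "\<exists>l r. p \<le> l \<and> PP l r")
  case True
  obtain l' where l': "p \<le> l'" "PP l' (rr p)" using rr_some True by blast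
  show ?thesis using PP_props[OF l'(2)] l'(1) by simp
next
  case False then show ?thesis using rr_none assms by simp
qed

lemma rr_mono: assumes "p \<le> q" shows "rr p \<le> rr q"
proof (cases "\<exists>l r. q \<le> l \<and> PP l r")
  case True
  then obtain l where l: "q \<le> l" "PP l (rr q)" using rr_some by blast
  then show ?thesis using rr_le[of p l "rr q"] assms by simp
next
  case False
  then show ?thesis using rr_none rr_bound by simp
qed

definition XX :: "nat \<Rightarrow> real" where
  "XX = (SOME X. goodX n rr 1 X)"

lemma XX_good: "goodX n rr 1 XX"
proof -
  have "\<exists>X. goodX n rr 1 X"
    by (rule goodX_exists) (use rr_mono rr_gt rr_bound in auto)
  then show ?thesis unfolding XX_def by (rule someI_ex)
qed

definition xx :: "nat \<Rightarrow> real" where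
  "xx a = (if a \<in> N then XX (posq a) else 0)"

lemma xx_diff:
  assumes a: "a \<in> N" and b: "b \<in> N" and lt: "posq a < posq b"
  shows "xx b < xx a \<and> xx a - xx b \<noteq> 1 \<and>
    (xx a - xx b > 1 \<longleftrightarrow> (\<exists>c d. nx c d \<and> posq a \<le> posq c \<and> posq d \<le> posq b))"
proof -
  have pa: "1 \<le> posq a" "posq b \<le> n" using posq_range a b by auto
  have G: "XX (posq b) < XX (posq a) \<and> (rr (posq a) \<le> posq b \<longrightarrow> XX (posq a) - XX (posq b) > 1) \<and>
      (posq b < rr (posq a) \<longrightarrow> XX (posq a) - XX (posq b) < 1)"
    using XX_good pa lt unfolding goodX_def by blast
  have "xx a = XX (posq a)" "xx b = XX (posq b)" using a b unfolding xx_def by auto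
  then show ?thesis using G rr_char[OF lt pa(2)] by (cases "rr (posq a) \<le> posq b") auto
qed

lemma xx_less_iff:
  assumes a: "a \<in> N" and b: "b \<in> N"
  shows "xx b < xx a \<longleftrightarrow> posq a < posq b"
proof -
  consider "posq a < posq b" | "posq a = posq b" | "posq b < posq a" by linarith
  then show ?thesis
  proof cases
    case 1 then show ?thesis using xx_diff a b by blast
  next
    case 2 then show ?thesis using posq_inj a b by auto
  next
    case 3 then show ?thesis using xx_diff[OF b a] by auto
  qed
qed

lemma xx_in: "xx \<in> shi_complement n"
  unfolding shi_complement_def
proof (rule CollectI, rule conjI)
  show "\<forall>i. i \<notin> N \<longrightarrow> xx i = 0" unfolding xx_def by simp
  show "\<forall>i j. 1 \<le> i \<longrightarrow> i < j \<longrightarrow> j \<le> n \<longrightarrow> xx i - xx j \<noteq> 0 \<and> xx i - xx j \<noteq> 1"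
  proof (intro allI impI)
    fix i j :: nat assume ij: "1 \<le> i" "i < j" "j \<le> n"
    then have N: "i \<in> N" "j \<in> N" by auto
    have "posq i \<noteq> posq j" using posq_inj[OF N] ij by auto
    then consider "posq i < posq j" | "posq j < posq i" by linarith
    then show "xx i - xx j \<noteq> 0 \<and> xx i - xx j \<noteq> 1"
    proof cases
      case 1 then show ?thesis using xx_diff[OF N 1] by auto
    next
      case 2 then show ?thesis using xx_diff[OF N(2) N(1) 2] by auto
    qed
  qed
qed

end


context pf_ctx
begin

lemma xx_pos: assumes a: "a \<in> N" shows "shi_pos n xx a = posq a"
proof -
  have pa: "posq a \<in> N" using posq_range a by blast
  have S: "{k \<in> N. xx k > xx a} = set (take (posq a - 1) ws)"
  proof
    show "{k \<in> N. xx a < xx k} \<subseteq> set (take (posq a - 1) ws)"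
    proof
      fix k assume k: "k \<in> {k \<in> N. xx a < xx k}"
      then have kN: "k \<in> N" and "posq k < posq a" using xx_less_iff[of k a] a by auto
      moreover have "ws ! (posq k - 1) = k" "posq k \<in> N" using posq_range kN by auto
      ultimately show "k \<in> set (take (posq a - 1) ws)"
        using pa ws_props(1) by (auto simp: in_set_conv_nth intro!: exI[of _ "posq k - 1"])
    qed
  next
    show "set (take (posq a - 1) ws) \<subseteq> {k \<in> N. xx a < xx k}"
    proof
      fix k assume "k \<in> set (take (posq a - 1) ws)"
      then obtain i where i: "i < posq a - 1" "ws ! i = k" using pa ws_props(1)
        by (auto simp: in_set_conv_nth)
      have iN: "i < n" using i pa by auto
      then have kN: "k \<in> N" using i ws_props by (metis nth_mem)
      have "posq k = Suc i" using posq_nth[OF iN] i by simp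
      then have "posq k < posq a" using i by simp
      then show "k \<in> {k \<in> N. xx a < xx k}" using xx_less_iff[of k a] a kN by auto
    qed
  qed
  have "card (set (take (posq a - 1) ws)) = posq a - 1"
    using distinct_card[OF distinct_take[OF ws_props(2)]] ws_props(1) pa by (auto simp: min_def)
  then show ?thesis unfolding shi_pos_def using S pa by simp
qed

lemma xx_pt: "shi_pt n xx" by (rule shi_pt.intro[OF xx_in])

lemma arc_xx:
  "shi_arc n xx i l \<longleftrightarrow> i \<in> N \<and> l \<in> N \<and> i < l \<and> (\<exists>c d. nx c d \<and> posq i \<le> posq c \<and> posq d \<le> posq l)"
proof
  assume A: "shi_arc n xx i l"
  then have N: "i \<in> N" "l \<in> N" "i < l" and g: "xx i - xx l > 1" unfolding shi_arc_def by auto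
  have "posq i < posq l"
  proof (rule ccontr)
    assume "\<not> posq i < posq l"
    then consider "posq i = posq l" | "posq l < posq i" by linarith
    then show False
    proof cases
      case 1 then show False using posq_inj[OF N(1,2)] N by simp
    next
      case 2 then show False using xx_diff[OF N(2) N(1) 2] g by simp
    qed
  qed
  then show "i \<in> N \<and> l \<in> N \<and> i < l \<and> (\<exists>c d. nx c d \<and> posq i \<le> posq c \<and> posq d \<le> posq l)"
    using xx_diff[OF N(1,2)] g N by blast
next
  assume A: "i \<in> N \<and> l \<in> N \<and> i < l \<and> (\<exists>c d. nx c d \<and> posq i \<le> posq c \<and> posq d \<le> posq l)"
  then obtain c d where cd: "nx c d" "posq i \<le> posq c" "posq d \<le> posq l" by blast
  have "posq i < posq l" using posq_nx[OF cd(1)] cd by simp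
  then have "xx i - xx l > 1" using xx_diff A cd by blast
  then show "shi_arc n xx i l" using A unfolding shi_arc_def by auto
qed

lemma nx_M: assumes cd: "nx c d" shows "shi_min_arc n xx c d"
proof -
  have N: "c \<in> N" "d \<in> N" "c < d" using nx_props[OF cd] by auto
  have arc: "shi_arc n xx c d" unfolding arc_xx using N cd by blast
  show ?thesis unfolding shi_min_arc_def
  proof (intro conjI notI)
    show "shi_arc n xx c d" by (rule arc)
    assume "\<exists>j k. shi_arc n xx j k \<and> (j, k) \<noteq> (c, d) \<and> shi_pos n xx c \<le> shi_pos n xx j \<and>
        shi_pos n xx k \<le> shi_pos n xx d"
    then obtain j k where jk: "shi_arc n xx j k" "(j, k) \<noteq> (c, d)" "shi_pos n xx c \<le> shi_pos n xx j"
      "shi_pos n xx k \<le> shi_pos n xx d" by blast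
    have jkN: "j \<in> N" "k \<in> N" using jk(1) unfolding arc_xx by auto
    have le: "posq c \<le> posq j" "posq k \<le> posq d" using jk xx_pos N jkN by auto
    obtain c' d' where c'd': "nx c' d'" "posq j \<le> posq c'" "posq d' \<le> posq k"
      using jk(1) unfolding arc_xx by blast
    have N': "c' \<in> N" "d' \<in> N" using nx_props[OF c'd'(1)] by auto
    show False
    proof (cases "c' = c")
      case True
      then have "d' = d" using nx_fun cd c'd'(1) by blast
      then have "posq j = posq c" "posq k = posq d" using le c'd' True by auto
      then have "j = c" "k = d" using posq_inj jkN N by auto
      then show False using jk(2) by simp
    next
      case False
      then have "posq c \<noteq> posq c'" using posq_inj N N' by blast
      then have "posq c < posq c'" using le c'd' by simp
      then have "posq d < posq d'" using posq_fifo[OF c'd'(1) cd] by simp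
      then show False using le c'd' by simp
    qed
  qed
qed

lemma M_nx: assumes m: "shi_min_arc n xx c d" shows "nx c d"
proof -
  interpret X: shi_pt n xx by (rule xx_pt)
  have arc: "shi_arc n xx c d" using X.M_arc m by blast
  then have N: "c \<in> N" "d \<in> N" unfolding arc_xx by auto
  obtain c' d' where c'd': "nx c' d'" "posq c \<le> posq c'" "posq d' \<le> posq d"
    using arc unfolding arc_xx by blast
  have N': "c' \<in> N" "d' \<in> N" using nx_props[OF c'd'(1)] by auto
  have "shi_min_arc n xx c' d'" using nx_M[OF c'd'(1)] .
  then have "c = c' \<and> d = d'" using X.M_nonnest[OF m] c'd' xx_pos N N' by simp
  then show ?thesis using c'd' by simp
qed

lemma chain_hd: "a \<in> N \<Longrightarrow> shi_same_chain n xx a (hdo (f a))"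
proof (induction a rule: less_induct)
  case (less a)
  interpret X: shi_pt n xx by (rule xx_pt)
  show ?case
  proof (cases "a = hdo (f a)")
    case True then show ?thesis using X.chain_refl by metis
  next
    case False
    then obtain c where c: "nx c a" using hd_or_nx less.prems by blast
    have cp: "c \<in> N" "c < a" "f c = f a" using nx_props[OF c] by auto
    have "X.chain c (hdo (f c))" using less.IH cp by blast
    moreover have "X.chain a c" using X.chain_M X.chain_sym nx_M[OF c] by blast
    ultimately show ?thesis using X.chain_trans cp by metis
  qed
qed

lemma Fsig_xx: "Fsig n xx = f"
proof
  interpret X: shi_pt n xx by (rule xx_pt)
  fix a
  show "Fsig n xx a = f a"
  proof (cases "a \<in> N")
    case False
    then show ?thesis using f_ext[OF False] False unfolding Fsig_def by auto
  next
    case True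
    have fa: "f a \<in> f ` N" using True by blast
    have hN: "hdo (f a) \<in> N" using hd_props(1)[OF fa] .
    have hd: "X.head (hdo (f a))" unfolding X.head_def
      using hN nx_not_hd[OF fa] M_nx by blast
    have "Fsig n xx a = shi_pos n xx (hdo (f a))" using X.f_head[OF True hd chain_hd[OF True]] .
    also have "\<dots> = posq (hdo (f a))" using xx_pos[OF hN] .
    also have "\<dots> = f a" using posq_hd[OF fa] .
    finally show ?thesis .
  qed
qed

end

lemma Fsig_surj':
  assumes "f \<in> parking_functions n"
  shows "\<exists>x \<in> shi_complement n. Fsig n x = f"
proof -
  interpret P: pf_ctx n f by (rule pf_ctx.intro[OF assms])
  show ?thesis using P.xx_in P.Fsig_xx by blast
qed


theorem theorem2p2:
  fixes n :: nat
  assumes "n \<ge> 1"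
  shows "bij_betw (shi_sigma n) (shi_regions n) (parking_functions n)"
  unfolding bij_betw_def
proof (intro conjI)
  show "inj_on (shi_sigma n) (shi_regions n)"
  proof (rule inj_onI)
    fix R1 R2 assume R: "R1 \<in> shi_regions n" "R2 \<in> shi_regions n" "shi_sigma n R1 = shi_sigma n R2"
    obtain x1 where x1: "x1 \<in> shi_complement n" "R1 = connected_component_set (shi_complement n) x1"
      using R(1) unfolding shi_regions_def by blast
    obtain x2 where x2: "x2 \<in> shi_complement n" "R2 = connected_component_set (shi_complement n) x2"
      using R(2) unfolding shi_regions_def by blast
    have "Fsig n x1 = Fsig n x2" using R(3) sigma_class x1 x2 by simp
    then have "same_sign n x1 x2" using Fsig_inj x1 x2 by blast
    then have "connected_component (shi_complement n) x1 x2" using same_sign_comp x1 x2 by blast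
    then show "R1 = R2" using x1 x2 connected_component_eq by blast
  qed
  show "shi_sigma n ` shi_regions n = parking_functions n"
  proof
    show "shi_sigma n ` shi_regions n \<subseteq> parking_functions n"
    proof
      fix g assume "g \<in> shi_sigma n ` shi_regions n"
      then obtain x where x: "x \<in> shi_complement n"
        "g = shi_sigma n (connected_component_set (shi_complement n) x)"
        unfolding shi_regions_def by blast
      then have "g = Fsig n x" using sigma_class by simp
      then show "g \<in> parking_functions n" using shi_pt.f_parking[OF shi_pt.intro[OF x(1)]] by simp
    qed
    show "parking_functions n \<subseteq> shi_sigma n ` shi_regions n"
    proof
      fix g assume "g \<in> parking_functions n"
      then obtain x where x: "x \<in> shi_complement n" "Fsig n x = g" using Fsig_surj' by blast
      then have "g = shi_sigma n (connected_component_set (shi_complement n) x)"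
        using sigma_class by simp
      then show "g \<in> shi_sigma n ` shi_regions n" unfolding shi_regions_def using x by blast
    qed
  qed
qed

end
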